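(* Every forward complete control system $\Sigma=(X,\mathcal U,\phi)$ that is input-to-state stable (ISS) is norm-to-integral ISS.
   Context: Let $X$, $U$ be Banach spaces and let $\mathcal U$ be a normed vector space of functions $\mathbb R_+\to U$ satisfying: (shift invariance) for all $u\in\mathcal U$ and $\tau\ge0$, $u(\cdot+\tau)\in\mathcal U$ and $\|u(\cdot+\tau)\|_{\mathcal U}\le\|u\|_{\mathcal U}$; (concatenation) for all $u_1,u_2\in\mathcal U$ and $t>0$ the function equal to $u_1(\tau)$ for $\tau\in[0,t]$ and to $u_2(\tau-t)$ for $\tau>t$ belongs to $\mathcal U$. A forward complete control system is a triple $\Sigma=(X,\mathcal U,\phi)$ with $\phi:\mathbb R_+\times X\times\mathcal U\to X$ such that: $\phi(0,x,u)=x$; (causality) $\phi(t,x,u)=\phi(t,x,\tilde u)$ whenever $u|_{[0,t]}=\tilde u|_{[0,t]}$; for each $(x,u)$ the map $t\mapsto\phi(t,x,u)$ is continuous; (cocycle) $\phi(h,\phi(t,x,u),u(t+\cdot))=\phi(t+h,x,u)$ for all $t,h\ge0$, $x\in X$, $u\in\mathcal U$. Comparison functions: $\mathcal K$ = continuous strictly increasing $\gamma:\mathbb R_+\to\mathbb R_+$ with $\gamma(0)=0$; $\mathcal K_\infty$ = unbounded functions in $\mathcal K$; $\mathcal L$ = continuous strictly decreasing $\gamma:\mathbb R_+\to\mathbb R_+$ with $\gamma(t)\to0$; $\mathcal{KL}$ = $\beta:\mathbb R_+^2\to\mathbb R_+$ with $\beta(\cdot,t)\in\mathcal K$ for all $t\ge0$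 and $\beta(r,\cdot)\in\mathcal L$ for all $r>0$. $\Sigma$ is ISS if there are $\beta\in\mathcal{KL}$, $\gamma\in\mathcal K$ with $\|\phi(t,x,u)\|_X\le\beta(\|x\|_X,t)+\gamma(\|u\|_{\mathcal U})$ for all $x\in X$, $u\in\mathcal U$, $t\ge0$. $\Sigma$ is norm-to-integral ISS if there are $\alpha\in\mathcal K$, $\psi,\sigma\in\mathcal K_\infty$ with $\int_0^t\alpha(\|\phi(s,x,u)\|_X)\,ds\le\psi(\|x\|_X)+t\,\sigma(\|u\|_{\mathcal U})$ for all $x\in X$, $u\in\mathcal U$, $t\ge0$. *)

theory Defs
  imports "HOL-Analysis.Analysis"
begin

text \<open>Functions \<open>\<real>\<^sub>+ \<rightarrow> U\<close> are represented as functions \<open>real \<Rightarrow> 'u\<close> that vanish on negative reals.\<close>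

definition shiftf :: "(real \<Rightarrow> 'u::zero) \<Rightarrow> real \<Rightarrow> real \<Rightarrow> 'u" where
  "shiftf u \<tau> = (\<lambda>s. if 0 \<le> s then u (s + \<tau>) else 0)"

definition concatf :: "(real \<Rightarrow> 'u::zero) \<Rightarrow> real \<Rightarrow> (real \<Rightarrow> 'u) \<Rightarrow> real \<Rightarrow> 'u" where
  "concatf u1 t u2 = (\<lambda>s. if s < 0 then 0 else if s \<le> t then u1 s else u2 (s - t))"

definition input_space :: "(real \<Rightarrow> 'u::real_normed_vector) set \<Rightarrow> ((real \<Rightarrow> 'u) \<Rightarrow> real) \<Rightarrow> bool" where
  "input_space UU nU \<longleftrightarrow>
     (\<forall>u\<in>UU. \<forall>s<0. u s = 0) \<and>
     (\<lambda>_. 0) \<in> UU \<and>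
     (\<forall>u\<in>UU. \<forall>v\<in>UU. (\<lambda>s. u s + v s) \<in> UU) \<and>
     (\<forall>u\<in>UU. \<forall>c::real. (\<lambda>s. c *\<^sub>R u s) \<in> UU) \<and>
     (\<forall>u\<in>UU. 0 \<le> nU u \<and> (nU u = 0 \<longleftrightarrow> u = (\<lambda>_. 0))) \<and>
     (\<forall>u\<in>UU. \<forall>v\<in>UU. nU (\<lambda>s. u s + v s) \<le> nU u + nU v) \<and>
     (\<forall>u\<in>UU. \<forall>c::real. nU (\<lambda>s. c *\<^sub>R u s) = \<bar>c\<bar> * nU u) \<and>
     (\<forall>u\<in>UU. \<forall>\<tau>\<ge>0. shiftf u \<tau> \<in> UU \<and> nU (shiftf u \<tau>) \<le> nU u) \<and>
     (\<forall>u1\<in>UU. \<forall>u2\<in>UU. \<forall>t>0. concatf u1 t u2 \<in> UU)"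

definition control_system ::
  "(real \<Rightarrow> 'u::real_normed_vector) set \<Rightarrow> ((real \<Rightarrow> 'u) \<Rightarrow> real) \<Rightarrow> (real \<Rightarrow> 'x \<Rightarrow> (real \<Rightarrow> 'u) \<Rightarrow> 'x::real_normed_vector) \<Rightarrow> bool" where
  "control_system UU nU \<phi> \<longleftrightarrow>
     input_space UU nU \<and>
     (\<forall>x. \<forall>u\<in>UU. \<phi> 0 x u = x) \<and>
     (\<forall>t\<ge>0. \<forall>x. \<forall>u\<in>UU. \<forall>v\<in>UU. (\<forall>s\<in>{0..t}. u s = v s) \<longrightarrow> \<phi> t x u = \<phi> t x v) \<and>
     (\<forall>x. \<forall>u\<in>UU. continuous_on {0..} (\<lambda>t. \<phi> t x u)) \<and>
     (\<forall>t\<ge>0. \<forall>h\<ge>0. \<forall>x. \<forall>u\<in>UU. \<phi> h (\<phi> t x u) (shiftf u t) = \<phi> (t + h) x u)"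

definition classK :: "(real \<Rightarrow> real) \<Rightarrow> bool" where
  "classK \<gamma> \<longleftrightarrow> continuous_on {0..} \<gamma> \<and> strict_mono_on {0..} \<gamma> \<and> \<gamma> 0 = 0 \<and> (\<forall>r\<ge>0. 0 \<le> \<gamma> r)"

definition classKinf :: "(real \<Rightarrow> real) \<Rightarrow> bool" where
  "classKinf \<gamma> \<longleftrightarrow> classK \<gamma> \<and> \<not> bdd_above (\<gamma> ` {0..})"

definition classL :: "(real \<Rightarrow> real) \<Rightarrow> bool" where
  "classL \<gamma> \<longleftrightarrow> continuous_on {0..} \<gamma> \<and> (\<forall>s\<ge>0. \<forall>t>s. \<gamma> t < \<gamma> s) \<and> (\<forall>r\<ge>0. 0 \<le> \<gamma> r) \<and>
     (\<gamma> \<longlongrightarrow> 0) at_top"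

definition classKL :: "(real \<Rightarrow> real \<Rightarrow> real) \<Rightarrow> bool" where
  "classKL \<beta> \<longleftrightarrow> (\<forall>t\<ge>0. classK (\<lambda>r. \<beta> r t)) \<and> (\<forall>r>0. classL (\<lambda>t. \<beta> r t))"

definition ISS ::
  "(real \<Rightarrow> 'u::real_normed_vector) set \<Rightarrow> ((real \<Rightarrow> 'u) \<Rightarrow> real) \<Rightarrow> (real \<Rightarrow> 'x \<Rightarrow> (real \<Rightarrow> 'u) \<Rightarrow> 'x::real_normed_vector) \<Rightarrow> bool" where
  "ISS UU nU \<phi> \<longleftrightarrow> (\<exists>\<beta> \<gamma>. classKL \<beta> \<and> classK \<gamma> \<and>
     (\<forall>x. \<forall>u\<in>UU. \<forall>t\<ge>0. norm (\<phi> t x u) \<le> \<beta> (norm x) t + \<gamma> (nU u)))"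

definition norm_to_integral_ISS ::
  "(real \<Rightarrow> 'u::real_normed_vector) set \<Rightarrow> ((real \<Rightarrow> 'u) \<Rightarrow> real) \<Rightarrow> (real \<Rightarrow> 'x \<Rightarrow> (real \<Rightarrow> 'u) \<Rightarrow> 'x::real_normed_vector) \<Rightarrow> bool" where
  "norm_to_integral_ISS UU nU \<phi> \<longleftrightarrow> (\<exists>\<alpha> \<psi> \<sigma>. classK \<alpha> \<and> classKinf \<psi> \<and> classKinf \<sigma> \<and>
     (\<forall>x. \<forall>u\<in>UU. \<forall>t\<ge>0. integral {0..t} (\<lambda>s. \<alpha> (norm (\<phi> s x u))) \<le> \<psi> (norm x) + t * \<sigma> (nU u)))"

end

theory Submission
  imports Defs
begin


lemma monoint:
  fixes G :: "real \<Rightarrow> real"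
  assumes m: "mono_on {0..} G" and a: "0 \<le> a" and ab: "a \<le> b"
  shows "G integrable_on {a..b}"
proof (rule integrable_on_mono_on, rule mono_onI)
  fix r s assume "r \<in> {a..b}" "s \<in> {a..b}" "r \<le> s"
  then show "G r \<le> G s" using a by (intro mono_onD[OF m]) auto
qed

lemma monoint_bounds:
  fixes G :: "real \<Rightarrow> real"
  assumes m: "mono_on {0..} G" and a: "0 \<le> a" and ab: "a \<le> b"
  shows "(b-a)*G a \<le> integral {a..b} G" "integral {a..b} G \<le> (b-a)*G b"
proof -
  have i: "G integrable_on {a..b}" using monoint[OF m a ab] .
  have "integral {a..b} (\<lambda>x. G a) \<le> integral {a..b} G"
  proof (rule integral_le[OF _ i])
    fix x assume "x \<in> {a..b}" then show "G a \<le> G x" using a by (intro mono_onD[OF m]) auto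
  qed (rule integrable_const_ivl)
  then show "(b-a)*G a \<le> integral {a..b} G" using ab by simp
  have "integral {a..b} G \<le> integral {a..b} (\<lambda>x. G b)"
  proof (rule integral_le[OF i])
    fix x assume "x \<in> {a..b}" then show "G x \<le> G b" using a by (intro mono_onD[OF m]) auto
  qed (rule integrable_const_ivl)
  then show "integral {a..b} G \<le> (b-a)*G b" using ab by simp
qed

lemma monoint_split:
  fixes G :: "real \<Rightarrow> real"
  assumes m: "mono_on {0..} G" and a: "0 \<le> a" and ab: "a \<le> b"
  shows "integral {0..b} G = integral {0..a} G + integral {a..b} G"
  using Henstock_Kurzweil_Integration.integral_combine[OF a ab monoint[OF m order_refl]] a ab by simp

lemma monoint_zero:
  fixes G :: "real \<Rightarrow> real"
  assumes m: "mono_on {0..} G"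
  shows "integral {0..0} G = 0"
  using monoint_bounds[OF m order_refl order_refl] by simp



lemma monoint_cont:
  fixes G :: "real \<Rightarrow> real"
  assumes m: "mono_on {0..} G" and nn: "\<And>x. 0 \<le> x \<Longrightarrow> 0 \<le> G x"
  shows "continuous_on {0..} (\<lambda>x. integral {0..x} G)"
  unfolding continuous_on_eq_continuous_within
proof (intro ballI)
  fix x :: real assume x: "x \<in> {0..}"
  define L where "L = G (x+1) + 1"
  have L: "L > 0" using nn[of "x+1"] x by (simp add: L_def)
  have lip: "\<bar>integral {0..y} G - integral {0..z} G\<bar> \<le> L * \<bar>y - z\<bar>"
    if "0 \<le> z" "z \<le> y" "y \<le> x + 1" for y z
  proof -
    have e: "integral {0..y} G - integral {0..z} G = integral {z..y} G"
      using monoint_split[OF m that(1,2)] by simp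
    have b1: "integral {z..y} G \<le> (y-z)*G y" and b2: "(y-z)*G z \<le> integral {z..y} G"
      using monoint_bounds[OF m that(1,2)] by auto
    have "G y \<le> G (x+1)" using that by (intro mono_onD[OF m]) auto
    then have "(y-z)*G y \<le> (y-z)*L" using that by (intro mult_left_mono) (auto simp: L_def)
    moreover have "0 \<le> (y-z)*G z" using nn[of z] that by simp
    ultimately show ?thesis using e b1 b2 that by (simp add: mult.commute)
  qed
  show "continuous (at x within {0..}) (\<lambda>x. integral {0..x} G)"
    unfolding continuous_within_eps_delta
  proof (intro allI impI)
    fix e :: real assume e: "0 < e"
    show "\<exists>d>0. \<forall>x'\<in>{0..}. dist x' x < d \<longrightarrow> dist (integral {0..x'} G) (integral {0..x} G) < e"
    proof (intro exI[of _ "min 1 (e/L)"] conjI ballI impI)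
      show "0 < min 1 (e/L)" using e L by simp
      fix y :: real assume y: "y \<in> {0..}" and d: "dist y x < min 1 (e / L)"
      have b: "\<bar>integral {0..y} G - integral {0..x} G\<bar> \<le> L * \<bar>y - x\<bar>"
      proof (cases "x \<le> y")
        case True then show ?thesis using lip[of x y] d x by (auto simp: dist_real_def)
      next
        case False then show ?thesis using lip[of y x] d y by (auto simp: dist_real_def abs_minus_commute)
      qed
      have "L * \<bar>y - x\<bar> < L * (e/L)" using d L by (intro mult_strict_left_mono) (auto simp: dist_real_def)
      then show "dist (integral {0..y} G) (integral {0..x} G) < e" using b L by (simp add: dist_real_def)
    qed
  qed
qed

lemma lowerK:
  fixes q :: "real \<Rightarrow> real"
  assumes pos: "\<And>v. 0 < v \<Longrightarrow> 0 < q v"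
    and mono: "\<And>v w. 0 < v \<Longrightarrow> v \<le> w \<Longrightarrow> q v \<le> q w"
  shows "\<exists>\<alpha>. classK \<alpha> \<and> (\<forall>v>0. \<alpha> v \<le> q v) \<and> (\<forall>v\<ge>0. \<alpha> v \<le> 1)"
proof -
  define p where "p w = (if 0 < w then min (q w) 1 else 0)" for w
  have pnn: "0 \<le> p x" for x using pos[of x] by (auto simp: p_def)
  have ppos: "0 < p x" if "0 < x" for x using pos[OF that] that by (auto simp: p_def)
  have pm: "mono_on {0..} p"
  proof (rule mono_onI)
    fix r s :: real assume "r \<in> {0..}" "s \<in> {0..}" "r \<le> s"
    then show "p r \<le> p s"
    proof (cases "r = 0")
      case True then show ?thesis using pnn[of s] by (simp add: p_def)
    next
      case False
      then have "0 < r" using \<open>r \<in> {0..}\<close> by simp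
      then have "q r \<le> q s" using mono \<open>r \<le> s\<close> by blast
      then show ?thesis using \<open>0 < r\<close> \<open>r \<le> s\<close> by (simp add: p_def min_def)
    qed
  qed
  define I where "I v = integral {0..v} p" for v
  define \<alpha> where "\<alpha> v = I v / (1 + v)" for v
  have I0: "I 0 = 0" unfolding I_def by (rule monoint_zero[OF pm])
  have Inn: "0 \<le> I v" if "0 \<le> v" for v
    using monoint_bounds(1)[OF pm order_refl that] pnn[of 0] by (simp add: I_def p_def)
  have Iup: "I v \<le> v * p v" if "0 \<le> v" for v
    using monoint_bounds(2)[OF pm order_refl that] by (simp add: I_def)
  have cI: "continuous_on {0..} I" unfolding I_def by (rule monoint_cont[OF pm pnn])
  have cont: "continuous_on {0..} \<alpha>"
    unfolding \<alpha>_def by (intro continuous_intros cI) auto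
  have abound: "\<alpha> v \<le> p v" if "0 \<le> v" for v
  proof -
    have "v * p v \<le> (1 + v) * p v" using pnn[of v] by (simp add: mult_right_mono)
    then have "I v \<le> (1 + v) * p v" using Iup[OF that] by linarith
    then show ?thesis using that by (simp add: \<alpha>_def divide_le_eq mult.commute)
  qed
  have smono: "strict_mono_on {0..} \<alpha>"
  proof (rule strict_mono_onI)
    fix a b :: real assume a: "a \<in> {0..}" and b: "b \<in> {0..}" and ab: "a < b"
    have a0: "0 \<le> a" using a by simp
    have split: "I b = I a + integral {a..b} p"
      unfolding I_def by (rule monoint_split[OF pm a0 less_imp_le[OF ab]])
    have J: "(b - a) * p a \<le> integral {a..b} p" using monoint_bounds(1)[OF pm a0 less_imp_le[OF ab]] .
    show "\<alpha> a < \<alpha> b"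
    proof (cases "a = 0")
      case True
      have b0: "0 < b" using ab True by simp
      have "I b = I (b/2) + integral {b/2..b} p"
        unfolding I_def by (rule monoint_split[OF pm]) (use b0 in auto)
      moreover have "(b - b/2) * p (b/2) \<le> integral {b/2..b} p"
        by (rule monoint_bounds(1)[OF pm]) (use b0 in auto)
      moreover have "0 < (b - b/2) * p (b/2)" using ppos[of "b/2"] b0 by simp
      moreover have "0 \<le> I (b/2)" using Inn[of "b/2"] b0 by simp
      ultimately have "0 < I b" by linarith
      then show ?thesis using True I0 b0 by (simp add: \<alpha>_def)
    next
      case False
      then have apos: "0 < a" using a0 by simp
      have pa: "0 < p a" using ppos[OF apos] .
      have "I a * (b - a) \<le> a * p a * (b - a)" using Iup[OF a0] ab by (simp add: mult_right_mono)
      also have "\<dots> < (1 + a) * p a * (b - a)" using pa ab by (simp add: mult_strict_right_mono)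
      also have "\<dots> \<le> (1 + a) * integral {a..b} p"
      proof -
        have "p a * (b - a) \<le> integral {a..b} p" using J by (simp add: mult.commute)
        then have "(1 + a) * (p a * (b - a)) \<le> (1 + a) * integral {a..b} p"
          using a0 by (intro mult_left_mono) auto
        then show ?thesis by (simp add: mult.assoc)
      qed
      finally have "I a * (1 + b) < I b * (1 + a)" unfolding split by (simp add: algebra_simps)
      moreover have "0 < 1 + a" "0 < 1 + b" using a0 ab by auto
      ultimately show ?thesis by (simp add: \<alpha>_def field_simps)
    qed
  qed
  have "classK \<alpha>" unfolding classK_def
    using cont smono I0 Inn by (auto simp: \<alpha>_def)
  moreover have "\<forall>v>0. \<alpha> v \<le> q v"
  proof (intro allI impI)
    fix v :: real assume v: "0 < v"
    then have "\<alpha> v \<le> min (q v) 1" using abound[of v] by (simp add: p_def)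
    then show "\<alpha> v \<le> q v" by simp
  qed
  moreover have "\<forall>v\<ge>0. \<alpha> v \<le> 1"
  proof (intro allI impI)
    fix v :: real assume v: "0 \<le> v"
    have "p v \<le> 1" by (simp add: p_def)
    then show "\<alpha> v \<le> 1" using abound[OF v] by simp
  qed
  ultimately show ?thesis by blast
qed



lemma upperKinf:
  fixes G :: "real \<Rightarrow> real"
  assumes m: "mono_on {0..} G" and nn: "\<And>x. 0 \<le> x \<Longrightarrow> 0 \<le> G x"
    and lim: "\<And>e. 0 < e \<Longrightarrow> \<exists>d>0. \<forall>r. 0 \<le> r \<and> r \<le> d \<longrightarrow> G r \<le> e"
  shows "\<exists>\<psi>. classKinf \<psi> \<and> (\<forall>r\<ge>0. G r \<le> \<psi> r)"
proof -
  define I where "I x = integral {0..x} G" for x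
  define H where "H r = (if r = 0 then 0 else I (2*r) / r)" for r
  define \<psi> where "\<psi> r = r + H r" for r
  have G0: "G 0 = 0"
  proof -
    have "G 0 \<le> e" if "0 < e" for e using lim[OF that] by auto
    then have "G 0 \<le> 0"
      by (metis dense_le_bounded linorder_not_le order_less_irrefl)
    then show ?thesis using nn[of 0] by simp
  qed
  have Inn: "0 \<le> I v" if "0 \<le> v" for v
    using monoint_bounds(1)[OF m order_refl that] by (simp add: I_def G0)
  have Iup: "I v \<le> v * G v" if "0 \<le> v" for v
    using monoint_bounds(2)[OF m order_refl that] by (simp add: I_def)
  have avg: "I x / x \<le> I y / y" if "0 < x" "x \<le> y" for x y
  proof -
    have split: "I y = I x + integral {x..y} G"
      unfolding I_def by (rule monoint_split[OF m]) (use that in auto)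
    have J: "(y - x) * G x \<le> integral {x..y} G" by (rule monoint_bounds(1)[OF m]) (use that in auto)
    have "(y - x) * I x \<le> (y - x) * (x * G x)" using Iup[of x] that by (intro mult_left_mono) auto
    also have "\<dots> = x * ((y - x) * G x)" by simp
    also have "\<dots> \<le> x * integral {x..y} G" using J that by (intro mult_left_mono) auto
    finally have "y * I x \<le> x * I y" unfolding split by (simp add: algebra_simps)
    then show ?thesis using that by (simp add: field_simps)
  qed
  have Hlow: "G r \<le> H r" if "0 \<le> r" for r
  proof (cases "r = 0")
    case True then show ?thesis by (simp add: H_def G0)
  next
    case False
    then have r: "0 < r" using that by simp
    have "I (2*r) = I r + integral {r..2*r} G" unfolding I_def by (rule monoint_split[OF m]) (use r in auto)
    moreover have "(2*r - r) * G r \<le> integral {r..2*r} G" by (rule monoint_bounds(1)[OF m]) (use r in auto)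
    moreover have "0 \<le> I r" using Inn r by simp
    ultimately have "r * G r \<le> I (2*r)" by simp
    then show ?thesis using r by (simp add: H_def field_simps)
  qed
  have Hup: "H r \<le> 2 * G (2*r)" if "0 \<le> r" for r
  proof (cases "r = 0")
    case True then show ?thesis by (simp add: H_def G0)
  next
    case False
    then have r: "0 < r" using that by simp
    have "I (2*r) \<le> (2*r) * G (2*r)" using Iup[of "2*r"] r by simp
    then show ?thesis using r by (simp add: H_def field_simps)
  qed
  have Hnn: "0 \<le> H r" if "0 \<le> r" for r using Hlow[OF that] nn[OF that] by simp
  have Hmono: "H r \<le> H s" if "0 \<le> r" "r \<le> s" for r s
  proof (cases "r = 0")
    case True then show ?thesis using Hnn[of s] that by (simp add: H_def)
  next
    case False
    then have r: "0 < r" using that by simp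
    have "I (2 * r) / (2 * r) \<le> I (2 * s) / (2 * s)" using avg[of "2 * r" "2 * s"] r that by simp
    then show ?thesis using r that by (simp add: H_def)
  qed
  have cI: "continuous_on {0..} I" unfolding I_def by (rule monoint_cont[OF m nn])
  have c1: "continuous_on {0<..} (\<lambda>r. I (2*r) / r)"
  proof (intro continuous_on_divide continuous_on_id)
    show "continuous_on {0<..} (\<lambda>r. I (2*r))"
      by (rule continuous_on_compose2[OF cI, of _ "\<lambda>r. 2*r"]) (auto intro!: continuous_intros)
  qed auto
  have c2: "continuous_on {0<..} H"
    using c1 by (rule continuous_on_cong[THEN iffD1, rotated 2]) (auto simp: H_def)
  have cH: "continuous_on {0..} H"
    unfolding continuous_on_eq_continuous_within
  proof (intro ballI)
    fix x :: real assume x: "x \<in> {0..}"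
    show "continuous (at x within {0..}) H"
    proof (cases "x = 0")
      case False
      then have "x \<in> {0<..}" using x by simp
      then have "isCont H x" using c2 continuous_on_eq_continuous_at[of "{0<..}" H] by auto
      then show ?thesis by (rule continuous_at_imp_continuous_at_within)
    next
      case True
      show ?thesis unfolding continuous_within_eps_delta True
      proof (intro allI impI)
        fix e :: real assume e: "0 < e"
        obtain d where d: "d > 0" "\<And>r. 0 \<le> r \<Longrightarrow> r \<le> d \<Longrightarrow> G r \<le> e/4"
          using lim[of "e/4"] e by auto
        show "\<exists>d>0. \<forall>x'\<in>{0..}. dist x' 0 < d \<longrightarrow> dist (H x') (H 0) < e"
        proof (intro exI[of _ "d/2"] conjI ballI impI)
          show "0 < d/2" using d by simp
          fix y :: real assume y: "y \<in> {0..}" and dy: "dist y 0 < d/2"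
          have "G (2*y) \<le> e/4" using d(2)[of "2*y"] y dy by (auto simp: dist_real_def)
          then have "H y \<le> e/2" using Hup[of y] y by simp
          then show "dist (H y) (H 0) < e" using Hnn[of y] y e by (simp add: dist_real_def H_def)
        qed
      qed
    qed
  qed
  have "classK \<psi>" unfolding classK_def
  proof (intro conjI allI impI)
    show "continuous_on {0..} \<psi>" unfolding \<psi>_def by (intro continuous_intros cH)
    show "strict_mono_on {0..} \<psi>"
    proof (rule strict_mono_onI)
      fix r s :: real assume "r \<in> {0..}" "s \<in> {0..}" "r < s"
      then show "\<psi> r < \<psi> s" using Hmono[of r s] by (simp add: \<psi>_def)
    qed
    show "\<psi> 0 = 0" by (simp add: \<psi>_def H_def)
    fix r :: real assume "0 \<le> r" then show "0 \<le> \<psi> r" using Hnn[of r] by (simp add: \<psi>_def)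
  qed
  moreover have "\<not> bdd_above (\<psi> ` {0..})"
  proof
    assume "bdd_above (\<psi> ` {0..})"
    then obtain M where M: "\<And>r. r \<in> {0..} \<Longrightarrow> \<psi> r \<le> M" by (auto simp: bdd_above_def)
    have "\<psi> (max M 0 + 1) \<le> M" by (rule M) simp
    moreover have "0 \<le> H (max M 0 + 1)" by (rule Hnn) simp
    ultimately show False by (simp add: \<psi>_def)
  qed
  moreover have "\<forall>r\<ge>0. G r \<le> \<psi> r"
  proof (intro allI impI)
    fix r :: real assume "0 \<le> r" then show "G r \<le> \<psi> r" using Hlow[of r] by (simp add: \<psi>_def)
  qed
  ultimately show ?thesis unfolding classKinf_def by (intro exI[of _ \<psi>]) simp
qed



lemma exp_int:
  fixes t :: real assumes "0 \<le> t"
  shows "((\<lambda>s. exp (-s)) has_integral (1 - exp (-t))) {0..t}"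
proof -
  have "((\<lambda>s. exp (-s)) has_integral ((- exp (-t)) - (- exp (-0)))) {0..t}"
  proof (rule fundamental_theorem_of_calculus[OF assms])
    fix x :: real assume "x \<in> {0..t}"
    have "((\<lambda>s. - exp (-s)) has_real_derivative exp (-x)) (at x within {0..t})"
      by (auto intro!: derivative_eq_intros)
    then show "((\<lambda>s. - exp (-s)) has_vector_derivative exp (-x)) (at x within {0..t})"
      by (simp add: has_real_derivative_iff_has_vector_derivative)
  qed
  then show ?thesis by simp
qed

lemma exp_int_le:
  fixes t c :: real assumes "0 \<le> t" "0 \<le> c"
  shows "integral {0..t} (\<lambda>s. c * exp (-s)) \<le> c" "(\<lambda>s. c * exp (-s)) integrable_on {0..t}"
proof -
  have i: "integral {0..t} (\<lambda>s. exp (-s)) = 1 - exp (-t)" using exp_int[OF assms(1)] by (rule integral_unique)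
  have "c * (1 - exp (-t)) \<le> c * 1" using assms by (intro mult_left_mono) auto
  then show "integral {0..t} (\<lambda>s. c * exp (-s)) \<le> c" using i by simp
  show "(\<lambda>s. c * exp (-s)) integrable_on {0..t}"
    by (intro integrable_continuous_interval continuous_intros)
qed



lemma KL_facts:
  assumes KL: "classKL \<beta>"
  shows "\<And>t. 0 \<le> t \<Longrightarrow> \<beta> 0 t = 0"
    and "\<And>r t. 0 \<le> r \<Longrightarrow> 0 \<le> t \<Longrightarrow> 0 \<le> \<beta> r t"
    and "\<And>r r' t. 0 \<le> r \<Longrightarrow> r \<le> r' \<Longrightarrow> 0 \<le> t \<Longrightarrow> \<beta> r t \<le> \<beta> r' t"
    and "\<And>r s t. 0 \<le> r \<Longrightarrow> 0 \<le> s \<Longrightarrow> s \<le> t \<Longrightarrow> \<beta> r t \<le> \<beta> r s"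
    and "\<And>r e. 0 < r \<Longrightarrow> 0 < e \<Longrightarrow> \<exists>T\<ge>0. \<forall>s\<ge>T. \<beta> r s < e"
    and "\<And>r. 0 \<le> r \<Longrightarrow> continuous_on {0..} (\<lambda>s. \<beta> r s)"
    and "continuous_on {0..} (\<lambda>r. \<beta> r 0)"
proof -
  have K: "\<And>t. 0 \<le> t \<Longrightarrow> classK (\<lambda>r. \<beta> r t)" and L: "\<And>r. 0 < r \<Longrightarrow> classL (\<lambda>t. \<beta> r t)"
    using KL unfolding classKL_def by auto
  show z: "\<And>t. 0 \<le> t \<Longrightarrow> \<beta> 0 t = 0" using K unfolding classK_def by auto
  show "\<And>r t. 0 \<le> r \<Longrightarrow> 0 \<le> t \<Longrightarrow> 0 \<le> \<beta> r t" using K unfolding classK_def by auto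
  show "\<And>r r' t. 0 \<le> r \<Longrightarrow> r \<le> r' \<Longrightarrow> 0 \<le> t \<Longrightarrow> \<beta> r t \<le> \<beta> r' t"
  proof -
    fix r r' t :: real assume a: "0 \<le> r" "r \<le> r'" "0 \<le> t"
    have sm: "strict_mono_on {0..} (\<lambda>r. \<beta> r t)" using K[OF a(3)] unfolding classK_def by auto
    show "\<beta> r t \<le> \<beta> r' t"
    proof (cases "r = r'")
      case False then show ?thesis using strict_mono_onD[OF sm, of r r'] a by auto
    qed simp
  qed
  show "\<And>r s t. 0 \<le> r \<Longrightarrow> 0 \<le> s \<Longrightarrow> s \<le> t \<Longrightarrow> \<beta> r t \<le> \<beta> r s"
  proof -
    fix r s t :: real assume a: "0 \<le> r" "0 \<le> s" "s \<le> t"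
    show "\<beta> r t \<le> \<beta> r s"
    proof (cases "r = 0")
      case True then show ?thesis using z a by simp
    next
      case False
      then have "classL (\<lambda>t. \<beta> r t)" using L a by simp
      then have "\<forall>s\<ge>0. \<forall>t>s. \<beta> r t < \<beta> r s" unfolding classL_def by auto
      then show ?thesis using a by (cases "s = t") (auto intro: less_imp_le)
    qed
  qed
  show "\<And>r e. 0 < r \<Longrightarrow> 0 < e \<Longrightarrow> \<exists>T\<ge>0. \<forall>s\<ge>T. \<beta> r s < e"
  proof -
    fix r e :: real assume a: "0 < r" "0 < e"
    have "((\<lambda>t. \<beta> r t) \<longlongrightarrow> 0) at_top" using L[OF a(1)] unfolding classL_def by auto
    then have "eventually (\<lambda>t. \<beta> r t < e) at_top" using a(2) by (rule order_tendstoD)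
    then obtain T where T: "\<And>s. s \<ge> T \<Longrightarrow> \<beta> r s < e" by (auto simp: eventually_at_top_linorder)
    show "\<exists>T\<ge>0. \<forall>s\<ge>T. \<beta> r s < e"
      by (rule exI[of _ "max T 0"]) (auto intro: T)
  qed
  show "\<And>r. 0 \<le> r \<Longrightarrow> continuous_on {0..} (\<lambda>s. \<beta> r s)"
  proof -
    fix r :: real assume a: "0 \<le> r"
    show "continuous_on {0..} (\<lambda>s. \<beta> r s)"
    proof (cases "r = 0")
      case True
      then show ?thesis using z continuous_on_cong[of "{0..}" "{0..}" "\<lambda>s. \<beta> r s" "\<lambda>s. 0"] by auto
    next
      case False then show ?thesis using L[of r] a unfolding classL_def by auto
    qed
  qed
  show "continuous_on {0..} (\<lambda>r. \<beta> r 0)" using K[of 0] unfolding classK_def by auto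
qed



lemma alpha_exists:
  assumes KL: "classKL \<beta>"
  shows "\<exists>\<alpha>. classK \<alpha> \<and> (\<forall>v\<ge>0. \<alpha> v \<le> 1) \<and>
     (\<forall>r s. 0 \<le> r \<longrightarrow> 0 \<le> s \<longrightarrow> 0 < 2 * \<beta> r s \<longrightarrow> r \<le> 1 + 1 / (2 * \<beta> r s) \<longrightarrow>
        \<alpha> (2 * \<beta> r s) \<le> exp (- 2 * s))"
proof -
  note F = KL_facts[OF KL]
  define S where "S v = {exp (- 2 * s) | s. 0 \<le> s \<and> v \<le> 2 * \<beta> (1 + 1/v) s}" for v
  define q where "q v = Inf (insert 1 (S v))" for v
  have bdd: "bdd_below (insert 1 (S v))" for v
    unfolding S_def bdd_below_def by (rule exI[of _ 0]) auto
  have qpos: "0 < q v" if v: "0 < v" for v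
  proof -
    have "0 < 1/v" using v by simp
    then have R: "0 < 1 + 1/v" by linarith
    obtain T where T: "T \<ge> 0" "\<And>s. s \<ge> T \<Longrightarrow> \<beta> (1 + 1/v) s < v/2"
      using F(5)[OF R, of "v/2"] v by auto
    have "exp (- 2 * T) \<le> q v" unfolding q_def
    proof (rule cInf_greatest)
      fix y assume "y \<in> insert 1 (S v)"
      then show "exp (- 2 * T) \<le> y"
      proof
        assume "y = 1" then show ?thesis using T(1) by simp
      next
        assume "y \<in> S v"
        then obtain s where s: "y = exp (- 2 * s)" "0 \<le> s" "v \<le> 2 * \<beta> (1 + 1/v) s"
          unfolding S_def by auto
        have "s < T" using T(2)[of s] s(3) by (cases "s \<ge> T") auto
        then show ?thesis using s(1) by simp
      qed
    qed simp
    then show ?thesis by (smt (verit) exp_gt_zero)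
  qed
  have qmono: "q v \<le> q w" if "0 < v" "v \<le> w" for v w
  proof -
    have "S w \<subseteq> S v"
    proof
      fix y assume "y \<in> S w"
      then obtain s where s: "y = exp (- 2 * s)" "0 \<le> s" "w \<le> 2 * \<beta> (1 + 1/w) s"
        unfolding S_def by auto
      have "1/w \<le> 1/v" using that by (simp add: frac_le)
      then have "\<beta> (1 + 1/w) s \<le> \<beta> (1 + 1/v) s" using that s(2) by (intro F(3)) auto
      then show "y \<in> S v" unfolding S_def using s that by auto
    qed
    then show ?thesis unfolding q_def by (intro cInf_superset_mono bdd) auto
  qed
  obtain \<alpha> where \<alpha>: "classK \<alpha>" "\<And>v. 0 < v \<Longrightarrow> \<alpha> v \<le> q v" "\<And>v. 0 \<le> v \<Longrightarrow> \<alpha> v \<le> 1"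
    using lowerK[of q] qpos qmono by blast
  have key: "\<alpha> (2 * \<beta> r s) \<le> exp (- 2 * s)"
    if r: "0 \<le> r" and s: "0 \<le> s" and v: "0 < 2 * \<beta> r s" and rv: "r \<le> 1 + 1 / (2 * \<beta> r s)" for r s
  proof -
    define v where "v = 2 * \<beta> r s"
    have "\<beta> r s \<le> \<beta> (1 + 1/v) s" using r rv s by (intro F(3)) (auto simp: v_def)
    then have "exp (- 2 * s) \<in> S v" unfolding S_def using s by (auto simp: v_def)
    then have "q v \<le> exp (- 2 * s)" unfolding q_def by (intro cInf_lower bdd) auto
    then show ?thesis using \<alpha>(2)[of v] v by (simp add: v_def)
  qed
  show ?thesis using \<alpha>(1,3) key by blast
qed



lemma K_facts:
  assumes "classK \<alpha>"
  shows "\<alpha> 0 = 0" "\<And>v. 0 \<le> v \<Longrightarrow> 0 \<le> \<alpha> v" "\<And>a b. 0 \<le> a \<Longrightarrow> a \<le> b \<Longrightarrow> \<alpha> a \<le> \<alpha> b"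
    "continuous_on {0..} \<alpha>"
proof -
  show "\<alpha> 0 = 0" "\<And>v. 0 \<le> v \<Longrightarrow> 0 \<le> \<alpha> v" "continuous_on {0..} \<alpha>"
    using assms unfolding classK_def by auto
  have sm: "strict_mono_on {0..} \<alpha>" using assms unfolding classK_def by auto
  show "\<And>a b. 0 \<le> a \<Longrightarrow> a \<le> b \<Longrightarrow> \<alpha> a \<le> \<alpha> b"
  proof -
    fix a b :: real assume ab: "0 \<le> a" "a \<le> b"
    show "\<alpha> a \<le> \<alpha> b"
    proof (cases "a = b")
      case False then show ?thesis using strict_mono_onD[OF sm, of a b] ab by auto
    qed simp
  qed
qed

lemma beta_integral_bound:
  assumes KL: "classKL \<beta>" and aK: "classK \<alpha>" and a1: "\<forall>v\<ge>0. \<alpha> v \<le> 1"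
    and key: "\<forall>r s. 0 \<le> r \<longrightarrow> 0 \<le> s \<longrightarrow> 0 < 2 * \<beta> r s \<longrightarrow> r \<le> 1 + 1 / (2 * \<beta> r s) \<longrightarrow>
        \<alpha> (2 * \<beta> r s) \<le> exp (- 2 * s)"
  shows "\<exists>\<psi>. classKinf \<psi> \<and> (\<forall>r t. 0 \<le> r \<longrightarrow> 0 \<le> t \<longrightarrow>
            (\<lambda>s. \<alpha> (2 * \<beta> r s)) integrable_on {0..t} \<and> integral {0..t} (\<lambda>s. \<alpha> (2 * \<beta> r s)) \<le> \<psi> r)"
proof -
  note F = KL_facts[OF KL]
  note A = K_facts[OF aK]
  define f where "f r s = \<alpha> (2 * \<beta> r s)" for r s
  have fcont: "continuous_on {0..} (f r)" if "0 \<le> r" for r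
    unfolding f_def
    by (rule continuous_on_compose2[OF A(4), of _ "\<lambda>s. 2 * \<beta> r s"])
       (use F(2) that in \<open>auto intro!: continuous_intros F(6)\<close>)
  have fint: "f r integrable_on {0..t}" if "0 \<le> r" for r t
    by (rule integrable_continuous_interval, rule continuous_on_subset[OF fcont[OF that]]) auto
  have fnn: "0 \<le> f r s" if "0 \<le> r" "0 \<le> s" for r s
    unfolding f_def using F(2)[OF that] by (intro A(2)) simp
  have fmono: "f r' s \<le> f r s" if "0 \<le> r'" "r' \<le> r" "0 \<le> s" for r r' s
    unfolding f_def using F(2)[of r' s] F(3)[of r' r s] that by (intro A(3)) auto
  have kb0: "f r s \<le> sqrt (f r 0) * exp (- s)"
    if r: "0 \<le> r" and s: "0 \<le> s" and c: "2 * \<beta> r s = 0 \<or> r \<le> 1 + 1 / (2 * \<beta> r s)" for r s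
  proof (cases "2 * \<beta> r s = 0")
    case True
    then have "f r s = 0" by (simp add: f_def A(1))
    moreover have "0 \<le> f r 0" using fnn r by simp
    ultimately show ?thesis by simp
  next
    case False
    then have v: "0 < 2 * \<beta> r s" using F(2)[OF r s] by simp
    have e: "f r s \<le> exp (- 2 * s)" using key r s v c False unfolding f_def by blast
    have d: "f r s \<le> f r 0" unfolding f_def using F(2)[OF r s] F(4)[OF r order_refl s] by (intro A(3)) auto
    have fn: "0 \<le> f r s" using fnn[OF r s] .
    have "f r s = sqrt (f r s) * sqrt (f r s)" using fn by simp
    also have "\<dots> \<le> sqrt (f r 0) * sqrt (exp (- 2 * s))"
      using fn fnn[OF r order_refl] by (intro mult_mono real_sqrt_le_mono d e) auto
    also have "sqrt (exp (- 2 * s)) = exp (- s)"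
    proof -
      have "exp (- 2 * s) = exp (- s) * exp (- s)" by (simp add: exp_add[symmetric])
      then show ?thesis by simp
    qed
    finally show ?thesis .
  qed
  have kbs: "f r s \<le> sqrt (f r 0) * exp (- s)" if "0 \<le> r" "r \<le> 1" "0 \<le> s" for r s
  proof (rule kb0)
    have "0 \<le> 1 / (2 * \<beta> r s)" using F(2)[of r s] that by simp
    then show "2 * \<beta> r s = 0 \<or> r \<le> 1 + 1 / (2 * \<beta> r s)"
      using that by linarith
  qed (use that in auto)
  have kb2: "\<exists>c\<ge>0. \<forall>s\<ge>0. f r s \<le> c * exp (- s)" if r: "0 \<le> r" for r
  proof (cases "r \<le> 1")
    case True then show ?thesis using kbs r fnn[OF r order_refl] by (intro exI[of _ "sqrt (f r 0)"]) auto
  next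
    case False
    then have r1: "0 < r - 1" "0 < r" by auto
    obtain T where T: "T \<ge> 0" "\<And>s. s \<ge> T \<Longrightarrow> \<beta> r s < 1 / (2 * (r - 1))"
      using F(5)[OF r1(2), of "1 / (2 * (r - 1))"] r1 by auto
    have f0: "0 \<le> f r 0" using fnn r by simp
    show ?thesis
    proof (intro exI[of _ "sqrt (f r 0) + exp T"] conjI allI impI)
      show "0 \<le> sqrt (f r 0) + exp T" using f0 by (simp add: add_nonneg_pos)
      fix s :: real assume s: "0 \<le> s"
      show "f r s \<le> (sqrt (f r 0) + exp T) * exp (- s)"
      proof (cases "s \<ge> T")
        case True
        have "2 * \<beta> r s = 0 \<or> r \<le> 1 + 1 / (2 * \<beta> r s)"
        proof (cases "2 * \<beta> r s = 0")
          case False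
          then have v: "0 < 2 * \<beta> r s" using F(2)[OF r s] by simp
          have "2 * \<beta> r s * (r - 1) < 1" using T(2)[OF True] r1 by (simp add: field_simps)
          then have "r - 1 < 1 / (2 * \<beta> r s)" using v by (simp add: field_simps)
          then show ?thesis by simp
        qed simp
        then have "f r s \<le> sqrt (f r 0) * exp (- s)" using kb0 r s by blast
        also have "\<dots> \<le> (sqrt (f r 0) + exp T) * exp (- s)" by (intro mult_right_mono) auto
        finally show ?thesis .
      next
        case False
        have "f r s \<le> 1" unfolding f_def using a1 F(2)[OF r s] by simp
        also have "1 \<le> exp T * exp (- s)" using False by (simp add: exp_add[symmetric])
        also have "\<dots> \<le> (sqrt (f r 0) + exp T) * exp (- s)" using f0 by (intro mult_right_mono) auto
        finally show ?thesis .
      qed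
    qed
  qed
  define A where "A r = {integral {0..t} (f r') | t r'. 0 \<le> t \<and> 0 \<le> r' \<and> r' \<le> r}" for r
  define G where "G r = Sup (A r)" for r
  have elem: "y \<le> c" if r: "0 \<le> r" and c: "0 \<le> c" "\<forall>s\<ge>0. f r s \<le> c * exp (- s)" and y: "y \<in> A r" for r c y
  proof -
    obtain t r' where y: "y = integral {0..t} (f r')" "0 \<le> t" "0 \<le> r'" "r' \<le> r"
      using y unfolding A_def by auto
    have "integral {0..t} (f r') \<le> integral {0..t} (\<lambda>s. c * exp (- s))"
    proof (rule integral_le[OF fint[OF y(3)] exp_int_le(2)[OF y(2) c(1)]])
      fix s assume "s \<in> {0..t}"
      then have "0 \<le> s" by simp
      then show "f r' s \<le> c * exp (- s)" using fmono[OF y(3,4)] c(2) by (meson order_trans)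
    qed
    also have "\<dots> \<le> c" by (rule exp_int_le(1)[OF y(2) c(1)])
    finally show ?thesis using y(1) by simp
  qed
  have bddA: "bdd_above (A r)" if r0: "0 \<le> r" for r
  proof -
    obtain c where "c \<ge> 0" "\<forall>s\<ge>0. f r s \<le> c * exp (- s)" using kb2[OF r0] by blast
    then show ?thesis using elem[OF r0] unfolding bdd_above_def by blast
  qed
  have Ane: "A r \<noteq> {}" if "0 \<le> r" for r unfolding A_def using that by blast
  have Ann: "0 \<le> y" if yA: "y \<in> A r" for r y
  proof -
    obtain t r' where y: "y = integral {0..t} (f r')" "0 \<le> t" "0 \<le> r'"
      using yA unfolding A_def by auto
    show ?thesis unfolding y(1) by (rule integral_nonneg[OF fint[OF y(3)]]) (use fnn y in auto)
  qed
  have Gnn: "0 \<le> G r" if r0: "0 \<le> r" for r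
  proof -
    obtain y where "y \<in> A r" using Ane[OF r0] by blast
    then show ?thesis unfolding G_def using Ann bddA[OF r0] by (meson cSup_upper order_trans)
  qed
  have Gmono: "mono_on {0..} G"
  proof (rule mono_onI)
    fix r s :: real assume "r \<in> {0..}" "s \<in> {0..}" "r \<le> s"
    then show "G r \<le> G s" unfolding G_def
      by (intro cSup_subset_mono Ane bddA) (auto simp: A_def intro: order_trans)
  qed
  define h where "h r = sqrt (f r 0)" for r
  have hcont: "continuous_on {0..} h"
  proof -
    have "continuous_on {0..} (\<lambda>r. \<alpha> (2 * \<beta> r 0))"
      by (rule continuous_on_compose2[OF A(4), of _ "\<lambda>r. 2 * \<beta> r 0"])
         (use F(2) in \<open>auto intro!: continuous_intros F(7)\<close>)
    then show ?thesis unfolding h_def f_def by (intro continuous_intros)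
  qed
  have h0: "h 0 = 0" by (simp add: h_def f_def F(1) A(1))
  have Glim: "\<exists>d>0. \<forall>r. 0 \<le> r \<and> r \<le> d \<longrightarrow> G r \<le> e" if e: "0 < e" for e
  proof -
    obtain d0 where d0: "d0 > 0" "\<And>x'. x' \<in> {0..} \<Longrightarrow> dist x' 0 < d0 \<Longrightarrow> dist (h x') (h 0) < e"
      using hcont e unfolding continuous_on_iff by (metis atLeast_iff order_refl)
    show ?thesis
    proof (intro exI[of _ "min 1 (d0/2)"] conjI allI impI)
      show "0 < min 1 (d0/2)" using d0 by simp
      fix r :: real assume r: "0 \<le> r \<and> r \<le> min 1 (d0/2)"
      have "h r < e" using d0(2)[of r] r d0(1) h0 by (auto simp: dist_real_def h_def)
      moreover have "G r \<le> h r" unfolding G_def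
      proof (rule cSup_least[OF Ane])
        fix y assume y: "y \<in> A r"
        show "y \<le> h r"
          by (rule elem[OF _ _ _ y]) (use r kbs fnn[of r 0] in \<open>auto simp: h_def\<close>)
      qed (use r in auto)
      ultimately show "G r \<le> e" by simp
    qed
  qed
  obtain \<psi> where \<psi>: "classKinf \<psi>" "\<forall>r\<ge>0. G r \<le> \<psi> r"
    using upperKinf[OF Gmono Gnn Glim] by blast
  show ?thesis
  proof (intro exI[of _ \<psi>] conjI allI impI \<psi>(1))
    fix r t :: real assume r: "0 \<le> r" and t: "0 \<le> t"
    show "(\<lambda>s. \<alpha> (2 * \<beta> r s)) integrable_on {0..t}" using fint[OF r] by (simp add: f_def[abs_def])
    have "integral {0..t} (f r) \<in> A r" unfolding A_def using r t by blast
    then have "integral {0..t} (f r) \<le> G r" unfolding G_def using bddA[OF r] by (rule cSup_upper)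
    moreover have "G r \<le> \<psi> r" using \<psi>(2) r by simp
    ultimately show "integral {0..t} (\<lambda>s. \<alpha> (2 * \<beta> r s)) \<le> \<psi> r" by (simp add: f_def[abs_def])
  qed
qed



theorem mainTheorem1:
  fixes UU :: "(real \<Rightarrow> 'u::banach) set"
    and nU :: "(real \<Rightarrow> 'u) \<Rightarrow> real"
    and \<phi> :: "real \<Rightarrow> 'x::banach \<Rightarrow> (real \<Rightarrow> 'u) \<Rightarrow> 'x"
  assumes "control_system UU nU \<phi>"
    and "ISS UU nU \<phi>"
  shows "norm_to_integral_ISS UU nU \<phi>"
proof -
  have IS: "input_space UU nU" using assms(1) unfolding control_system_def by simp
  have nUnn: "\<And>u. u \<in> UU \<Longrightarrow> 0 \<le> nU u"
  proof -
    fix u assume u: "u \<in> UU"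
    have "\<forall>u\<in>UU. 0 \<le> nU u \<and> (nU u = 0 \<longleftrightarrow> u = (\<lambda>_. 0))"
      using IS unfolding input_space_def by (elim conjE) assumption
    then show "0 \<le> nU u" using u by simp
  qed
  obtain \<beta> \<gamma> where KL: "classKL \<beta>" and gK: "classK \<gamma>"
    and bound: "\<And>x u t. u \<in> UU \<Longrightarrow> 0 \<le> t \<Longrightarrow> norm (\<phi> t x u) \<le> \<beta> (norm x) t + \<gamma> (nU u)"
    using assms(2) unfolding ISS_def by auto
  note F = KL_facts[OF KL]
  note Gm = K_facts[OF gK]
  obtain \<alpha> where aK: "classK \<alpha>" and a1: "\<forall>v\<ge>0. \<alpha> v \<le> 1"
    and key: "\<forall>r s. 0 \<le> r \<longrightarrow> 0 \<le> s \<longrightarrow> 0 < 2 * \<beta> r s \<longrightarrow> r \<le> 1 + 1 / (2 * \<beta> r s) \<longrightarrow>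
        \<alpha> (2 * \<beta> r s) \<le> exp (- 2 * s)"
    using alpha_exists[OF KL] by blast
  note A = K_facts[OF aK]
  obtain \<psi> where \<psi>: "classKinf \<psi>" and
    ib: "\<And>r t. 0 \<le> r \<Longrightarrow> 0 \<le> t \<Longrightarrow>
       (\<lambda>s. \<alpha> (2 * \<beta> r s)) integrable_on {0..t} \<and> integral {0..t} (\<lambda>s. \<alpha> (2 * \<beta> r s)) \<le> \<psi> r"
    using beta_integral_bound[OF KL aK a1 key] by blast
  define \<sigma> where "\<sigma> v = \<alpha> (2 * \<gamma> v) + v" for v
  have sK: "classK \<sigma>" unfolding classK_def
  proof (intro conjI allI impI)
    have "continuous_on {0..} (\<lambda>v. \<alpha> (2 * \<gamma> v))"
    proof (rule continuous_on_compose2[OF A(4), of _ "\<lambda>v. 2 * \<gamma> v"])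
      show "continuous_on {0..} (\<lambda>v. 2 * \<gamma> v)" by (intro continuous_on_mult_left Gm(4))
      show "(\<lambda>v. 2 * \<gamma> v) ` {0..} \<subseteq> {0..}"
      proof (rule image_subsetI)
        fix v :: real assume "v \<in> {0..}"
        then have "0 \<le> \<gamma> v" using Gm(2)[of v] by simp
        then show "2 * \<gamma> v \<in> {0..}" by simp
      qed
    qed
    then show "continuous_on {0..} \<sigma>" unfolding \<sigma>_def by (intro continuous_intros)
    show "strict_mono_on {0..} \<sigma>"
    proof (rule strict_mono_onI)
      fix r s :: real assume rs: "r \<in> {0..}" "s \<in> {0..}" "r < s"
      have "\<alpha> (2 * \<gamma> r) \<le> \<alpha> (2 * \<gamma> s)"
        using rs Gm(2)[of r] Gm(3)[of r s] by (intro A(3)) auto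
      then show "\<sigma> r < \<sigma> s" using rs by (simp add: \<sigma>_def)
    qed
    show "\<sigma> 0 = 0" by (simp add: \<sigma>_def Gm(1) A(1))
    fix r :: real assume "0 \<le> r" then show "0 \<le> \<sigma> r"
      using A(2)[of "2 * \<gamma> r"] Gm(2)[of r] by (simp add: \<sigma>_def)
  qed
  have sKinf: "classKinf \<sigma>" unfolding classKinf_def
  proof (intro conjI sK notI)
    assume "bdd_above (\<sigma> ` {0..})"
    then obtain M where M: "\<And>r. r \<in> {0..} \<Longrightarrow> \<sigma> r \<le> M" by (auto simp: bdd_above_def)
    have "\<sigma> (max M 0 + 1) \<le> M" by (rule M) simp
    moreover have "0 \<le> \<alpha> (2 * \<gamma> (max M 0 + 1))" using Gm(2)[of "max M 0 + 1"] by (intro A(2)) simp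
    ultimately show False by (simp add: \<sigma>_def)
  qed
  have \<psi>nn: "0 \<le> \<psi> r" if "0 \<le> r" for r using \<psi> that unfolding classKinf_def classK_def by auto
  have \<sigma>nn: "0 \<le> \<sigma> r" if "0 \<le> r" for r using sK that unfolding classK_def by auto
  have main: "integral {0..t} (\<lambda>s. \<alpha> (norm (\<phi> s x u))) \<le> \<psi> (norm x) + t * \<sigma> (nU u)"
    if u: "u \<in> UU" and t: "0 \<le> t" for x u t
  proof (cases "(\<lambda>s. \<alpha> (norm (\<phi> s x u))) integrable_on {0..t}")
    case False
    then show ?thesis using \<psi>nn[of "norm x"] \<sigma>nn[OF nUnn[OF u]] t by (simp add: not_integrable_integral)
  next
    case True
    define r where "r = norm x"
    define w where "w = nU u"
    have r: "0 \<le> r" and w: "0 \<le> w" using nUnn[OF u] by (auto simp: r_def w_def)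
    have ib': "(\<lambda>s. \<alpha> (2 * \<beta> r s)) integrable_on {0..t}" "integral {0..t} (\<lambda>s. \<alpha> (2 * \<beta> r s)) \<le> \<psi> r"
      using ib[OF r t] by auto
    have pw: "\<alpha> (norm (\<phi> s x u)) \<le> \<alpha> (2 * \<beta> r s) + \<alpha> (2 * \<gamma> w)" if s: "s \<in> {0..t}" for s
    proof -
      have s0: "0 \<le> s" using s by simp
      have b0: "0 \<le> \<beta> r s" using F(2)[OF r s0] .
      have g0: "0 \<le> \<gamma> w" using Gm(2)[OF w] .
      have "\<alpha> (norm (\<phi> s x u)) \<le> \<alpha> (\<beta> r s + \<gamma> w)"
        using bound[OF u s0, of x] by (intro A(3)) (auto simp: r_def w_def)
      also have "\<dots> \<le> \<alpha> (2 * \<beta> r s) + \<alpha> (2 * \<gamma> w)"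
      proof (cases "\<beta> r s \<le> \<gamma> w")
        case True
        then have "\<alpha> (\<beta> r s + \<gamma> w) \<le> \<alpha> (2 * \<gamma> w)" using b0 g0 by (intro A(3)) auto
        moreover have "0 \<le> \<alpha> (2 * \<beta> r s)" using b0 by (intro A(2)) simp
        ultimately show ?thesis by simp
      next
        case False
        then have "\<alpha> (\<beta> r s + \<gamma> w) \<le> \<alpha> (2 * \<beta> r s)" using b0 g0 by (intro A(3)) auto
        moreover have "0 \<le> \<alpha> (2 * \<gamma> w)" using g0 by (intro A(2)) simp
        ultimately show ?thesis by simp
      qed
      finally show ?thesis .
    qed
    have "integral {0..t} (\<lambda>s. \<alpha> (norm (\<phi> s x u)))
        \<le> integral {0..t} (\<lambda>s. \<alpha> (2 * \<beta> r s) + \<alpha> (2 * \<gamma> w))"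
    proof (rule integral_le[OF True])
      show "(\<lambda>s. \<alpha> (2 * \<beta> r s) + \<alpha> (2 * \<gamma> w)) integrable_on {0..t}"
        by (rule integrable_add[OF ib'(1) integrable_const_ivl])
    qed (rule pw)
    also have "\<dots> = integral {0..t} (\<lambda>s. \<alpha> (2 * \<beta> r s)) + t * \<alpha> (2 * \<gamma> w)"
      using t by (subst integral_add[OF ib'(1)]) auto
    also have "\<dots> \<le> \<psi> r + t * \<sigma> w"
    proof -
      have "\<alpha> (2 * \<gamma> w) \<le> \<sigma> w" using w by (simp add: \<sigma>_def)
      then have "t * \<alpha> (2 * \<gamma> w) \<le> t * \<sigma> w" using t by (intro mult_left_mono)
      then show ?thesis using ib'(2) by simp
    qed
    finally show ?thesis by (simp add: r_def w_def)
  qed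
  have M: "\<forall>x. \<forall>u\<in>UU. \<forall>t\<ge>0. integral {0..t} (\<lambda>s. \<alpha> (norm (\<phi> s x u))) \<le> \<psi> (norm x) + t * \<sigma> (nU u)"
    using main by blast
  show ?thesis unfolding norm_to_integral_ISS_def
    by (rule exI[of _ \<alpha>], rule exI[of _ \<psi>], rule exI[of _ \<sigma>]) (intro conjI aK \<psi> sKinf M)
qed


end
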